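(* Let $\Phi:\{0,1\}^n\to\{0,1\}^n$, $\mu\in\{0,1\}^n$ and $\rho\in P_n$. Then: a) $\overline{W}[\Phi^\rho(\mu,\cdot)]=\overline{W}(Or_\rho(\mu))$; b) $\underline{W}[\Phi^\rho(\mu,\cdot)]\subset\underline{W}(Or_\rho(\mu))$; c) $\overline{W}[\omega_\rho(\mu)]=\overline{W}(\omega_\rho(\mu))$; d) $\underline{W}[\omega_\rho(\mu)]\subset\underline{W}(\omega_\rho(\mu))$.
   Context: Let $\mathbf{B}=\{0,1\}$ (discrete topology), $n\ge1$, $\Phi:\mathbf{B}^n\to\mathbf{B}^n$. For $\nu\in\mathbf{B}^n$: $\Phi^\nu_i(\mu)=\mu_i$ if $\nu_i=0$, $=\Phi_i(\mu)$ if $\nu_i=1$; $\Phi^{\alpha^0\dots\alpha^k}=\Phi^{\alpha^k}\circ\cdots\circ\Phi^{\alpha^0}$. A sequence $(\alpha^k)_{k\in\mathbf{N}}$ in $\mathbf{B}^n$ is progressive if each $\{k:\alpha^k_i=1\}$ is infinite. $Seq$ = strictly increasing real sequences unbounded above. $P_n$ = functions $\rho:\mathbf{R}\to\mathbf{B}^n$ with $\rho(t_k)=\alpha^k$, $\rho(t)=0$ for $t\notin\{t_k\}$, $\alpha$ progressive, $(t_k)\in Seq$. Orbit: $\Phi^\rho(\mu,t)=\mu$ for $t<t_0$, $=\Phi^{\alpha^0\dots\alpha^k}(\mu)$ for $t\in[t_k,t_{k+1})$; $Or_\rho(\mu)=\{\Phi^\rho(\mu,t):t\in\mathbf{R}\}$.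 $\omega_\rho(\mu)=\{\mu':\exists(s_k)\in Seq,\ \Phi^\rho(\mu,s_k)=\mu'$ for all large $k\}$. For a nonempty set $A\subset\mathbf{B}^n$: $\overline{W}(A)=\{\mu':\exists\rho'\in P_n,\ \omega_{\rho'}(\mu')\subset A\}$ and $\underline{W}(A)=\{\mu':\forall\rho'\in P_n,\ \omega_{\rho'}(\mu')\subset A\}$. Basins of the orbit and $\omega$-limit set: $\overline{W}[\Phi^\rho(\mu,\cdot)]=\{\mu':\exists\rho'\in P_n,\exists t',\forall t\ge t',\ \Phi^{\rho'}(\mu',t)=\Phi^\rho(\mu,t)\}$, $\underline{W}[\Phi^\rho(\mu,\cdot)]=\{\mu':\forall\rho'\in P_n,\exists t',\forall t\ge t',\ \Phi^{\rho'}(\mu',t)=\Phi^\rho(\mu,t)\}$, $\overline{W}[\omega_\rho(\mu)]=\{\mu':\exists\rho'\in P_n,\ \omega_{\rho'}(\mu')=\omega_\rho(\mu)\}$, $\underline{W}[\omega_\rho(\mu)]=\{\mu':\forall\rho'\in P_n,\ \omega_{\rho'}(\mu')=\omega_\rho(\mu)\}$. *)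

theory Defs
  imports Main "HOL-Library.Infinite_Set" Complex_Main
begin

text \<open>Points of B^n are functions 'n => bool over a finite index type 'n
  (True = 1, False = 0). The zero vector is (\<lambda>_. False).\<close>

type_synonym 'n state = "'n \<Rightarrow> bool"

definition upd :: "('n state \<Rightarrow> 'n state) \<Rightarrow> 'n state \<Rightarrow> 'n state \<Rightarrow> 'n state" where
  "upd \<Phi> \<nu> \<mu> = (\<lambda>i. if \<nu> i then \<Phi> \<mu> i else \<mu> i)"

fun iterc :: "('n state \<Rightarrow> 'n state) \<Rightarrow> (nat \<Rightarrow> 'n state) \<Rightarrow> 'n state \<Rightarrow> nat \<Rightarrow> 'n state" where
  "iterc \<Phi> \<alpha> \<mu> 0 = upd \<Phi> (\<alpha> 0) \<mu>"
| "iterc \<Phi> \<alpha> \<mu> (Suc k) = upd \<Phi> (\<alpha> (Suc k)) (iterc \<Phi> \<alpha> \<mu> k)"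

definition progressive :: "(nat \<Rightarrow> 'n state) \<Rightarrow> bool" where
  "progressive \<alpha> \<longleftrightarrow> (\<forall>i. infinite {k. \<alpha> k i})"

definition Seq :: "(nat \<Rightarrow> real) set" where
  "Seq = {t. strict_mono t \<and> (\<forall>M. \<exists>k. M < t k)}"

definition is_rep :: "(real \<Rightarrow> 'n state) \<Rightarrow> (nat \<Rightarrow> 'n state) \<Rightarrow> (nat \<Rightarrow> real) \<Rightarrow> bool" where
  "is_rep \<rho> \<alpha> t \<longleftrightarrow> progressive \<alpha> \<and> t \<in> Seq \<and> (\<forall>k. \<rho> (t k) = \<alpha> k)
      \<and> (\<forall>s. s \<notin> range t \<longrightarrow> \<rho> s = (\<lambda>_. False))"

definition Pn :: "(real \<Rightarrow> 'n state) set" where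
  "Pn = {\<rho>. \<exists>\<alpha> t. is_rep \<rho> \<alpha> t}"

definition orbit_rep :: "('n state \<Rightarrow> 'n state) \<Rightarrow> (nat \<Rightarrow> 'n state) \<Rightarrow> (nat \<Rightarrow> real)
    \<Rightarrow> 'n state \<Rightarrow> real \<Rightarrow> 'n state" where
  "orbit_rep \<Phi> \<alpha> t \<mu> \<tau> =
     (if \<tau> < t 0 then \<mu> else iterc \<Phi> \<alpha> \<mu> (THE k. t k \<le> \<tau> \<and> \<tau> < t (Suc k)))"

text \<open>The orbit Phi^rho(mu, tau), computed from a representation (alpha, t) of rho
  (the orbit does not depend on the choice of representation).\<close>
definition orbit :: "('n state \<Rightarrow> 'n state) \<Rightarrow> (real \<Rightarrow> 'n state) \<Rightarrow> 'n state \<Rightarrow> real \<Rightarrow> 'n state" where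
  "orbit \<Phi> \<rho> \<mu> \<tau> = (let (\<alpha>, t) = (SOME p. is_rep \<rho> (fst p) (snd p)) in orbit_rep \<Phi> \<alpha> t \<mu> \<tau>)"

definition Or :: "('n state \<Rightarrow> 'n state) \<Rightarrow> (real \<Rightarrow> 'n state) \<Rightarrow> 'n state \<Rightarrow> 'n state set" where
  "Or \<Phi> \<rho> \<mu> = range (orbit \<Phi> \<rho> \<mu>)"

definition omega :: "('n state \<Rightarrow> 'n state) \<Rightarrow> (real \<Rightarrow> 'n state) \<Rightarrow> 'n state \<Rightarrow> 'n state set" where
  "omega \<Phi> \<rho> \<mu> = {\<mu>'. \<exists>s \<in> Seq. \<exists>K. \<forall>k\<ge>K. orbit \<Phi> \<rho> \<mu> (s k) = \<mu>'}"

definition Wup :: "('n state \<Rightarrow> 'n state) \<Rightarrow> 'n state set \<Rightarrow> 'n state set" where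
  "Wup \<Phi> A = {\<mu>'. \<exists>\<rho>'\<in>Pn. omega \<Phi> \<rho>' \<mu>' \<subseteq> A}"

definition Wdown :: "('n state \<Rightarrow> 'n state) \<Rightarrow> 'n state set \<Rightarrow> 'n state set" where
  "Wdown \<Phi> A = {\<mu>'. \<forall>\<rho>'\<in>Pn. omega \<Phi> \<rho>' \<mu>' \<subseteq> A}"

definition Wup_orb :: "('n state \<Rightarrow> 'n state) \<Rightarrow> (real \<Rightarrow> 'n state) \<Rightarrow> 'n state set" where
  "Wup_orb \<Phi> x = {\<mu>'. \<exists>\<rho>'\<in>Pn. \<exists>t'. \<forall>t\<ge>t'. orbit \<Phi> \<rho>' \<mu>' t = x t}"

definition Wdown_orb :: "('n state \<Rightarrow> 'n state) \<Rightarrow> (real \<Rightarrow> 'n state) \<Rightarrow> 'n state set" where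
  "Wdown_orb \<Phi> x = {\<mu>'. \<forall>\<rho>'\<in>Pn. \<exists>t'. \<forall>t\<ge>t'. orbit \<Phi> \<rho>' \<mu>' t = x t}"

definition Wup_lim :: "('n state \<Rightarrow> 'n state) \<Rightarrow> 'n state set \<Rightarrow> 'n state set" where
  "Wup_lim \<Phi> S = {\<mu>'. \<exists>\<rho>'\<in>Pn. omega \<Phi> \<rho>' \<mu>' = S}"

definition Wdown_lim :: "('n state \<Rightarrow> 'n state) \<Rightarrow> 'n state set \<Rightarrow> 'n state set" where
  "Wdown_lim \<Phi> S = {\<mu>'. \<forall>\<rho>'\<in>Pn. omega \<Phi> \<rho>' \<mu>' = S}"

end

theory Submission
  imports Defs
begin

lemma sl_snoc: "finite (A::real set) \<Longrightarrow> (\<forall>a\<in>A. a < x) \<Longrightarrow> sorted_list_of_set (insert x A) = sorted_list_of_set A @ [x]"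
  by (subst sorted_list_of_set_insert) (auto intro!: sorted_insort_is_snoc less_imp_le)

fun iter_n :: "('n state \<Rightarrow> 'n state) \<Rightarrow> (nat \<Rightarrow> 'n state) \<Rightarrow> 'n state \<Rightarrow> nat \<Rightarrow> 'n state" where
  "iter_n \<Phi> \<alpha> \<mu> 0 = \<mu>"
| "iter_n \<Phi> \<alpha> \<mu> (Suc k) = upd \<Phi> (\<alpha> k) (iter_n \<Phi> \<alpha> \<mu> k)"

lemma iterc_iter: "iterc \<Phi> \<alpha> \<mu> k = iter_n \<Phi> \<alpha> \<mu> (Suc k)"
  by (induction k) auto

lemma iter_n_add: "iter_n \<Phi> \<alpha> \<mu> (a + b) = iter_n \<Phi> (\<lambda>k. \<alpha> (k + a)) (iter_n \<Phi> \<alpha> \<mu> a) b"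
  by (induction b) (auto simp: add.commute)

lemma iter_n_cong: "(\<forall>k<m. \<alpha> k = \<beta> k) \<Longrightarrow> iter_n \<Phi> \<alpha> \<mu> m = iter_n \<Phi> \<beta> \<mu> m"
  by (induction m) auto

lemma upd_zero: "upd \<Phi> (\<lambda>_. False) m = m"
  by (simp add: upd_def)

definition NN :: "(nat \<Rightarrow> real) \<Rightarrow> real \<Rightarrow> nat" where
  "NN t \<tau> = (LEAST k. \<tau> < t k)"

lemma Seq_D: "t \<in> Seq \<Longrightarrow> strict_mono t" "t \<in> Seq \<Longrightarrow> \<exists>k. M < t k"
  by (auto simp: Seq_def)

lemma NN_props:
  assumes "t \<in> Seq"
  shows "\<tau> < t (NN t \<tau>)" "k < NN t \<tau> \<Longrightarrow> t k \<le> \<tau>"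
proof -
  obtain k0 where "\<tau> < t k0" using Seq_D(2)[OF assms] by blast
  then show "\<tau> < t (NN t \<tau>)" unfolding NN_def by (rule LeastI)
  show "k < NN t \<tau> \<Longrightarrow> t k \<le> \<tau>" unfolding NN_def using not_less_Least by force
qed

lemma NN_eq:
  assumes "t \<in> Seq" "\<tau> < t n" "\<forall>k<n. t k \<le> \<tau>"
  shows "NN t \<tau> = n"
  unfolding NN_def
proof (rule Least_equality)
  show "\<tau> < t n" by fact
  fix y assume "\<tau> < t y"
  then show "n \<le> y" using assms(3) by (meson not_le not_less)
qed

lemma seq_eventually_ge:
  assumes "s \<in> Seq" shows "\<exists>k0. \<forall>k\<ge>k0. c \<le> s k"
proof -
  obtain k0 where k0: "c < s k0" using Seq_D(2)[OF assms] by blast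
  have "\<forall>k\<ge>k0. c \<le> s k"
    using k0 strict_mono_less_eq[OF Seq_D(1)[OF assms]] by (meson less_le_trans less_imp_le)
  then show ?thesis by blast
qed

lemma orbit_rep_iter:
  assumes "t \<in> Seq"
  shows "orbit_rep \<Phi> \<alpha> t \<mu> \<tau> = iter_n \<Phi> \<alpha> \<mu> (NN t \<tau>)"
proof (cases "\<tau> < t 0")
  case True
  then have "NN t \<tau> = 0" using NN_eq[OF assms, of \<tau> 0] by simp
  then show ?thesis using True by (simp add: orbit_rep_def)
next
  case False
  have sm: "strict_mono t" using Seq_D(1)[OF assms] .
  have "NN t \<tau> \<noteq> 0"
  proof
    assume "NN t \<tau> = 0" then show False using False NN_props(1)[OF assms, where \<tau>=\<tau>] by simp
  qed
  then obtain k0 where k0: "NN t \<tau> = Suc k0" by (cases "NN t \<tau>") auto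
  have "(THE k. t k \<le> \<tau> \<and> \<tau> < t (Suc k)) = k0"
  proof (rule the_equality)
    show "t k0 \<le> \<tau> \<and> \<tau> < t (Suc k0)" using NN_props[OF assms, where \<tau>=\<tau>] k0 by auto
    fix k assume h: "t k \<le> \<tau> \<and> \<tau> < t (Suc k)"
    have "\<forall>j<Suc k. t j \<le> \<tau>"
      using h strict_mono_less_eq[OF sm] by (meson less_Suc_eq_le order_trans)
    then have "NN t \<tau> = Suc k" using NN_eq[OF assms] h by blast
    then show "k = k0" using k0 by simp
  qed
  then show ?thesis using False k0 by (simp add: orbit_rep_def iterc_iter)
qed

definition canon :: "('n state \<Rightarrow> 'n state) \<Rightarrow> (real \<Rightarrow> 'n state) \<Rightarrow> 'n state \<Rightarrow> real \<Rightarrow> 'n state" where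
  "canon \<Phi> \<rho> \<mu> \<tau> = foldl (\<lambda>m \<nu>. upd \<Phi> \<nu> m) \<mu>
     (map \<rho> (sorted_list_of_set {s. \<rho> s \<noteq> (\<lambda>_. False) \<and> s \<le> \<tau>}))"

lemma rep_support: "is_rep \<rho> \<alpha> t \<Longrightarrow> \<rho> s \<noteq> (\<lambda>_. False) \<Longrightarrow> \<exists>k. s = t k"
  unfolding is_rep_def by blast

lemma iter_canon:
  assumes r: "is_rep \<rho> \<alpha> t"
  shows "iter_n \<Phi> \<alpha> \<mu> n = foldl (\<lambda>m \<nu>. upd \<Phi> \<nu> m) \<mu>
     (map \<rho> (sorted_list_of_set {s. \<rho> s \<noteq> (\<lambda>_. False) \<and> s < t n}))"
proof (induction n)
  have sm: "strict_mono t" using r by (auto simp: is_rep_def Seq_def)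
  case 0
  have E: "{s. \<rho> s \<noteq> (\<lambda>_. False) \<and> s < t 0} = {}"
  proof safe
    fix s assume "\<rho> s \<noteq> (\<lambda>_. False)" "s < t 0"
    then obtain k where "s = t k" using rep_support[OF r] by blast
    then show "s \<in> {}" using \<open>s < t 0\<close> strict_mono_less_eq[OF sm, of 0 k] by simp
  qed
  show ?case by (subst E) simp
next
  have sm: "strict_mono t" using r by (auto simp: is_rep_def Seq_def)
  have rt: "\<And>k. \<rho> (t k) = \<alpha> k" using r by (auto simp: is_rep_def)
  case (Suc n)
  define A where "A = {s. \<rho> s \<noteq> (\<lambda>_. False) \<and> s < t n}"
  have tn: "t n < t (Suc n)" using sm by (simp add: strict_mono_def)
  have finA: "finite A"
  proof (rule finite_subset)
    show "A \<subseteq> t ` {..<n}"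
    proof
      fix s assume "s \<in> A"
      then have h: "\<rho> s \<noteq> (\<lambda>_. False)" "s < t n" by (simp_all add: A_def)
      then obtain k where k: "s = t k" using rep_support[OF r] by blast
      then have "k < n" using h(2) strict_mono_less[OF sm] by simp
      then show "s \<in> t ` {..<n}" using k by simp
    qed
  qed simp
  have between: "\<rho> s \<noteq> (\<lambda>_. False) \<and> s < t (Suc n) \<longleftrightarrow> s \<in> A \<or> (s = t n \<and> \<alpha> n \<noteq> (\<lambda>_. False))" for s
  proof
    assume h: "\<rho> s \<noteq> (\<lambda>_. False) \<and> s < t (Suc n)"
    then obtain k where k: "s = t k" using rep_support[OF r] by blast
    then have "k < Suc n" using h strict_mono_less[OF sm] by simp
    show "s \<in> A \<or> (s = t n \<and> \<alpha> n \<noteq> (\<lambda>_. False))"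
    proof (cases "k = n")
      case True
      then show ?thesis using h k rt[of n] by simp
    next
      case False
      then have "k < n" using \<open>k < Suc n\<close> by simp
      then have "s < t n" using k strict_mono_less[OF sm] by simp
      then show ?thesis using h by (simp add: A_def)
    qed
  next
    assume "s \<in> A \<or> (s = t n \<and> \<alpha> n \<noteq> (\<lambda>_. False))"
    then show "\<rho> s \<noteq> (\<lambda>_. False) \<and> s < t (Suc n)"
    proof
      assume "s \<in> A"
      then show ?thesis using tn by (simp add: A_def)
    next
      assume "s = t n \<and> \<alpha> n \<noteq> (\<lambda>_. False)"
      then show ?thesis using tn rt[of n] by simp
    qed
  qed
  show ?case
  proof (cases "\<alpha> n = (\<lambda>_. False)")
    case True
    have "{s. \<rho> s \<noteq> (\<lambda>_. False) \<and> s < t (Suc n)} = A" using between True by blast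
    then show ?thesis using Suc True by (simp add: A_def upd_zero)
  next
    case False
    have "{s. \<rho> s \<noteq> (\<lambda>_. False) \<and> s < t (Suc n)} = insert (t n) A" using between False by blast
    moreover have "sorted_list_of_set (insert (t n) A) = sorted_list_of_set A @ [t n]"
      using sl_snoc[OF finA] A_def by auto
    ultimately show ?thesis using Suc rt by (simp add: A_def)
  qed
qed

lemma orbit_rep_canon:
  assumes r: "is_rep \<rho> \<alpha> t"
  shows "orbit_rep \<Phi> \<alpha> t \<mu> \<tau> = canon \<Phi> \<rho> \<mu> \<tau>"
proof -
  have tS: "t \<in> Seq" using r by (auto simp: is_rep_def)
  have "{s. \<rho> s \<noteq> (\<lambda>_. False) \<and> s < t (NN t \<tau>)} = {s. \<rho> s \<noteq> (\<lambda>_. False) \<and> s \<le> \<tau>}"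
  proof safe
    fix s assume h: "\<rho> s \<noteq> (\<lambda>_. False)" "s < t (NN t \<tau>)"
    then obtain k where k: "s = t k" using rep_support[OF r] by blast
    then have "k < NN t \<tau>" using h strict_mono_less[OF Seq_D(1)[OF tS]] by auto
    then show "s \<le> \<tau>" using NN_props(2)[OF tS] k by auto
  next
    fix s assume "s \<le> \<tau>" then show "s < t (NN t \<tau>)" using NN_props(1)[OF tS, where \<tau>=\<tau>] by auto
  qed
  then show ?thesis unfolding canon_def orbit_rep_iter[OF tS] iter_canon[OF r] by simp
qed

lemma orbit_eq:
  assumes r: "is_rep \<rho> \<alpha> t"
  shows "orbit \<Phi> \<rho> \<mu> \<tau> = orbit_rep \<Phi> \<alpha> t \<mu> \<tau>"
proof -
  define p where "p = (SOME p. is_rep \<rho> (fst p) (snd p))"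
  have "is_rep \<rho> (fst p) (snd p)" unfolding p_def
    by (rule someI[of _ "(\<alpha>, t)"]) (simp add: r)
  then have "orbit_rep \<Phi> (fst p) (snd p) \<mu> \<tau> = canon \<Phi> \<rho> \<mu> \<tau>" by (rule orbit_rep_canon)
  moreover have "orbit \<Phi> \<rho> \<mu> \<tau> = orbit_rep \<Phi> (fst p) (snd p) \<mu> \<tau>"
    by (simp add: orbit_def p_def split_def Let_def)
  ultimately show ?thesis using orbit_rep_canon[OF r] by simp
qed

lemma omega_tail:
  assumes H: "\<forall>\<tau>\<ge>c. orbit \<Phi> \<rho>' \<mu>' \<tau> = orbit \<Phi> \<rho> \<mu> \<tau>"
  shows "omega \<Phi> \<rho>' \<mu>' = omega \<Phi> \<rho> \<mu>"
proof -
  have *: "\<exists>K. \<forall>k\<ge>K. g (s k) = y" if h1: "s \<in> Seq" and h2: "\<forall>k\<ge>K. f (s k) = y" and h3: "\<forall>\<tau>\<ge>c. f \<tau> = g \<tau>"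
    for s K y and f g :: "real \<Rightarrow> 'a state"
  proof -
    obtain k0 where "\<forall>k\<ge>k0. c \<le> s k" using seq_eventually_ge[OF h1] by blast
    then have "\<forall>k\<ge>max K k0. g (s k) = y" using h2 h3 by auto
    then show ?thesis by blast
  qed
  have H': "\<forall>\<tau>\<ge>c. orbit \<Phi> \<rho> \<mu> \<tau> = orbit \<Phi> \<rho>' \<mu>' \<tau>" using H by simp
  show ?thesis
  proof (rule set_eqI)
    fix y
    show "y \<in> omega \<Phi> \<rho>' \<mu>' \<longleftrightarrow> y \<in> omega \<Phi> \<rho> \<mu>"
    proof
      assume "y \<in> omega \<Phi> \<rho>' \<mu>'"
      then obtain s K where "s \<in> Seq" "\<forall>k\<ge>K. orbit \<Phi> \<rho>' \<mu>' (s k) = y"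
        unfolding omega_def by blast
      from *[OF this H] \<open>s \<in> Seq\<close> show "y \<in> omega \<Phi> \<rho> \<mu>" unfolding omega_def by blast
    next
      assume "y \<in> omega \<Phi> \<rho> \<mu>"
      then obtain s K where "s \<in> Seq" "\<forall>k\<ge>K. orbit \<Phi> \<rho> \<mu> (s k) = y"
        unfolding omega_def by blast
      from *[OF this H'] \<open>s \<in> Seq\<close> show "y \<in> omega \<Phi> \<rho>' \<mu>'" unfolding omega_def by blast
    qed
  qed
qed

lemma omega_sub_Or: "omega \<Phi> \<rho> \<mu> \<subseteq> Or \<Phi> \<rho> \<mu>"
  unfolding omega_def Or_def by blast

lemma omega_nonempty:
  fixes \<Phi> :: "('n::finite) state \<Rightarrow> 'n state"
  shows "\<exists>y. y \<in> omega \<Phi> \<rho> \<mu>"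
proof -
  define f where "f = (\<lambda>k::nat. orbit \<Phi> \<rho> \<mu> (real k))"
  have "finite (f ` UNIV)" by simp
  then obtain y where y: "infinite (f -` {y})"
    using inf_img_fin_dom[of f UNIV] by auto
  define S where "S = f -` {y}"
  define s where "s = (\<lambda>j. real (enumerate S j))"
  have sm: "strict_mono (enumerate S)" using strict_mono_enumerate y S_def by blast
  have "s \<in> Seq"
    unfolding Seq_def
  proof safe
    show "strict_mono s" using sm by (simp add: s_def strict_mono_def)
    fix M :: real
    obtain k :: nat where "M < real k" using reals_Archimedean2 by blast
    moreover have "k \<le> enumerate S k" using seq_suble[OF sm] .
    ultimately show "\<exists>k. M < s k" unfolding s_def by (meson of_nat_le_iff less_le_trans)
  qed
  moreover have "\<forall>k\<ge>0. orbit \<Phi> \<rho> \<mu> (s k) = y"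
    using enumerate_in_set[of S] y S_def by (auto simp: s_def f_def)
  ultimately show ?thesis unfolding omega_def by blast
qed

lemma splice:
  assumes "\<rho> \<in> Pn" "\<rho>' \<in> Pn" "y \<in> omega \<Phi> \<rho>' \<mu>'" "y \<in> Or \<Phi> \<rho> \<mu>"
  shows "\<exists>\<rho>''\<in>Pn. \<exists>c. \<forall>\<tau>\<ge>c. orbit \<Phi> \<rho>'' \<mu>' \<tau> = orbit \<Phi> \<rho> \<mu> \<tau>"
proof -
  obtain \<alpha> t where r: "is_rep \<rho> \<alpha> t" using assms(1) by (auto simp: Pn_def)
  obtain \<alpha>' t' where r': "is_rep \<rho>' \<alpha>' t'" using assms(2) by (auto simp: Pn_def)
  have tS: "t \<in> Seq" and t'S: "t' \<in> Seq" using r r' by (auto simp: is_rep_def)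
  have sm: "strict_mono t" using Seq_D(1)[OF tS] .
  obtain s K where "orbit \<Phi> \<rho>' \<mu>' (s K) = y" using assms(3) unfolding omega_def by blast
  then obtain m where ym: "y = iter_n \<Phi> \<alpha>' \<mu>' m"
    using orbit_eq[OF r'] orbit_rep_iter[OF t'S] by metis
  obtain c where "orbit \<Phi> \<rho> \<mu> c = y" using assms(4) unfolding Or_def by blast
  then obtain j0 where yj: "y = iter_n \<Phi> \<alpha> \<mu> j0"
    using orbit_eq[OF r] orbit_rep_iter[OF tS] by metis
  define t2 where "t2 = (\<lambda>k. if k < m then t j0 - real (m - k) else t (k - m + j0))"
  define \<alpha>2 where "\<alpha>2 = (\<lambda>k. if k < m then \<alpha>' k else \<alpha> (k - m + j0))"
  define \<rho>2 where "\<rho>2 = (\<lambda>\<tau>. if \<tau> \<in> range t2 then \<alpha>2 (inv t2 \<tau>) else (\<lambda>_. False))"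
  have sm2: "strict_mono t2"
    unfolding strict_mono_Suc_iff
  proof
    fix k
    show "t2 k < t2 (Suc k)"
    proof (cases "Suc k < m")
      case True then show ?thesis by (simp add: t2_def)
    next
      case False
      show ?thesis
      proof (cases "k < m")
        case True
        then have "k = m - 1" using False by simp
        then show ?thesis using True False by (simp add: t2_def)
      next
        case False
        then have "Suc k - m + j0 = Suc (k - m + j0)" by simp
        then show ?thesis using False strict_mono_less[OF sm] by (simp add: t2_def)
      qed
    qed
  qed
  have t2S: "t2 \<in> Seq"
    unfolding Seq_def
  proof safe
    show "strict_mono t2" by fact
    fix M
    obtain k where k: "M < t k" using Seq_D(2)[OF tS] by blast
    have "t k \<le> t (k + j0)" using strict_mono_less_eq[OF sm] by simp
    moreover have "t2 (k + m) = t (k + j0)" by (simp add: t2_def)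
    ultimately show "\<exists>k. M < t2 k" using k by (metis less_le_trans)
  qed
  have prog: "progressive \<alpha>2"
    unfolding progressive_def
  proof
    fix i
    have "infinite {k. \<alpha> k i}" using r by (auto simp: is_rep_def progressive_def)
    then have inf: "\<forall>M. \<exists>n\<ge>M. \<alpha> n i" unfolding infinite_nat_iff_unbounded_le by auto
    show "infinite {k. \<alpha>2 k i}"
      unfolding infinite_nat_iff_unbounded_le
    proof
      fix M
      obtain n where n: "n \<ge> M + j0" "\<alpha> n i" using inf by blast
      define k where "k = n - j0 + m"
      have "k \<ge> M" "\<not> k < m" "k - m + j0 = n" using n by (auto simp: k_def)
      then show "\<exists>k'\<ge>M. k' \<in> {k. \<alpha>2 k i}" using n by (auto simp: \<alpha>2_def)
    qed
  qed
  have r2: "is_rep \<rho>2 \<alpha>2 t2"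
    unfolding is_rep_def
    using prog t2S strict_mono_imp_inj_on[OF sm2] by (auto simp: \<rho>2_def)
  have "\<rho>2 \<in> Pn" using r2 by (auto simp: Pn_def)
  moreover have "\<forall>\<tau>\<ge>t j0. orbit \<Phi> \<rho>2 \<mu>' \<tau> = orbit \<Phi> \<rho> \<mu> \<tau>"
  proof safe
    fix \<tau> assume ht: "t j0 \<le> \<tau>"
    define n where "n = NN t \<tau>"
    have n1: "\<tau> < t n" and n2: "\<And>k. k < n \<Longrightarrow> t k \<le> \<tau>" using NN_props[OF tS] n_def by auto
    have jn: "j0 \<le> n"
    proof (rule ccontr)
      assume "\<not> j0 \<le> n"
      then have "t n < t j0" using strict_mono_less[OF sm] by simp
      then show False using n1 ht by simp
    qed
    have "NN t2 \<tau> = n - j0 + m"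
    proof (rule NN_eq[OF t2S])
      have "\<not> n - j0 + m < m" "n - j0 + m - m + j0 = n" using jn by simp_all
      then show "\<tau> < t2 (n - j0 + m)" using n1 by (simp only: t2_def if_False)
      show "\<forall>k<n - j0 + m. t2 k \<le> \<tau>"
      proof safe
        fix k assume k: "k < n - j0 + m"
        show "t2 k \<le> \<tau>"
        proof (cases "k < m")
          case True then show ?thesis using ht by (simp add: t2_def)
        next
          case False
          then have "k - m + j0 < n" using k jn by simp
          then show ?thesis using False n2 by (simp add: t2_def)
        qed
      qed
    qed
    then have "orbit \<Phi> \<rho>2 \<mu>' \<tau> = iter_n \<Phi> \<alpha>2 \<mu>' (m + (n - j0))"
      unfolding orbit_eq[OF r2] orbit_rep_iter[OF t2S] by (simp add: add.commute)
    also have "\<dots> = iter_n \<Phi> (\<lambda>k. \<alpha>2 (k + m)) (iter_n \<Phi> \<alpha>2 \<mu>' m) (n - j0)"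
      by (rule iter_n_add)
    also have "iter_n \<Phi> \<alpha>2 \<mu>' m = y" using ym iter_n_cong[of m \<alpha>2 \<alpha>'] by (simp add: \<alpha>2_def)
    also have "(\<lambda>k. \<alpha>2 (k + m)) = (\<lambda>k. \<alpha> (k + j0))" by (simp add: \<alpha>2_def)
    also have "iter_n \<Phi> (\<lambda>k. \<alpha> (k + j0)) y (n - j0) = iter_n \<Phi> \<alpha> \<mu> (j0 + (n - j0))"
      using yj iter_n_add by metis
    also have "\<dots> = orbit \<Phi> \<rho> \<mu> \<tau>"
      using jn unfolding orbit_eq[OF r] orbit_rep_iter[OF tS] n_def by simp
    finally show "orbit \<Phi> \<rho>2 \<mu>' \<tau> = orbit \<Phi> \<rho> \<mu> \<tau>" .
  qed
  ultimately show ?thesis by blast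
qed

theorem theorem54:
  fixes \<Phi> :: "('n::finite) state \<Rightarrow> 'n state" and \<mu> :: "'n state" and \<rho> :: "real \<Rightarrow> 'n state"
  assumes "\<rho> \<in> Pn"
  shows "Wup_orb \<Phi> (orbit \<Phi> \<rho> \<mu>) = Wup \<Phi> (Or \<Phi> \<rho> \<mu>)
    \<and> Wdown_orb \<Phi> (orbit \<Phi> \<rho> \<mu>) \<subseteq> Wdown \<Phi> (Or \<Phi> \<rho> \<mu>)
    \<and> Wup_lim \<Phi> (omega \<Phi> \<rho> \<mu>) = Wup \<Phi> (omega \<Phi> \<rho> \<mu>)
    \<and> Wdown_lim \<Phi> (omega \<Phi> \<rho> \<mu>) \<subseteq> Wdown \<Phi> (omega \<Phi> \<rho> \<mu>)"
proof (intro conjI)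
  show "Wup_orb \<Phi> (orbit \<Phi> \<rho> \<mu>) = Wup \<Phi> (Or \<Phi> \<rho> \<mu>)"
  proof
    show "Wup_orb \<Phi> (orbit \<Phi> \<rho> \<mu>) \<subseteq> Wup \<Phi> (Or \<Phi> \<rho> \<mu>)"
      unfolding Wup_orb_def Wup_def using omega_tail omega_sub_Or by blast
    show "Wup \<Phi> (Or \<Phi> \<rho> \<mu>) \<subseteq> Wup_orb \<Phi> (orbit \<Phi> \<rho> \<mu>)"
    proof
      fix \<mu>' assume "\<mu>' \<in> Wup \<Phi> (Or \<Phi> \<rho> \<mu>)"
      then obtain \<rho>' where "\<rho>' \<in> Pn" "omega \<Phi> \<rho>' \<mu>' \<subseteq> Or \<Phi> \<rho> \<mu>" by (auto simp: Wup_def)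
      moreover obtain y where "y \<in> omega \<Phi> \<rho>' \<mu>'" using omega_nonempty by blast
      ultimately show "\<mu>' \<in> Wup_orb \<Phi> (orbit \<Phi> \<rho> \<mu>)"
        using splice[OF assms] by (auto simp: Wup_orb_def)
    qed
  qed
  show "Wdown_orb \<Phi> (orbit \<Phi> \<rho> \<mu>) \<subseteq> Wdown \<Phi> (Or \<Phi> \<rho> \<mu>)"
    unfolding Wdown_orb_def Wdown_def using omega_tail omega_sub_Or by blast
  show "Wup_lim \<Phi> (omega \<Phi> \<rho> \<mu>) = Wup \<Phi> (omega \<Phi> \<rho> \<mu>)"
  proof
    show "Wup_lim \<Phi> (omega \<Phi> \<rho> \<mu>) \<subseteq> Wup \<Phi> (omega \<Phi> \<rho> \<mu>)"
      unfolding Wup_lim_def Wup_def by blast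
    show "Wup \<Phi> (omega \<Phi> \<rho> \<mu>) \<subseteq> Wup_lim \<Phi> (omega \<Phi> \<rho> \<mu>)"
    proof
      fix \<mu>' assume "\<mu>' \<in> Wup \<Phi> (omega \<Phi> \<rho> \<mu>)"
      then obtain \<rho>' where "\<rho>' \<in> Pn" "omega \<Phi> \<rho>' \<mu>' \<subseteq> omega \<Phi> \<rho> \<mu>" by (auto simp: Wup_def)
      moreover obtain y where "y \<in> omega \<Phi> \<rho>' \<mu>'" using omega_nonempty by blast
      ultimately obtain \<rho>'' c where "\<rho>'' \<in> Pn" "\<forall>\<tau>\<ge>c. orbit \<Phi> \<rho>'' \<mu>' \<tau> = orbit \<Phi> \<rho> \<mu> \<tau>"
        using splice[OF assms] omega_sub_Or by blast
      then show "\<mu>' \<in> Wup_lim \<Phi> (omega \<Phi> \<rho> \<mu>)"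
        using omega_tail unfolding Wup_lim_def by blast
    qed
  qed
  show "Wdown_lim \<Phi> (omega \<Phi> \<rho> \<mu>) \<subseteq> Wdown \<Phi> (omega \<Phi> \<rho> \<mu>)"
    unfolding Wdown_lim_def Wdown_def by blast
qed

end
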